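(* Let $H=(\mathbb N,\mathbb N,\mathbb N,p_1,p_2,p_3)$ with $\mathbb N=\{0,1,2,\dots\}$ and $p_1(k,\ell,m)=\ell+1$ if $k=\ell+1$ and $0$ otherwise, $p_2(k,\ell,m)=k$ if $k=\ell$ and $0$ otherwise, $p_3(k,\ell,m)=0$, with the pure belief structure. Then property B holds, $\overline{GR}^{\omega}=(\emptyset,\emptyset,\mathbb N)$, $\overline{GR}^{\omega+1}=(\emptyset,\emptyset,\emptyset)$, and $\overline{LR}^{\alpha}=\overline{GR}^{\alpha}$ for all ordinals $\alpha$; in particular the closure ordinal of both $\overline{GR}$ and $\overline{LR}$ is $\omega+1$.
   Context: Restrictions of $H$ are triples $(S_1,S_2,S_3)$ with $S_i\subseteq\mathbb N$, ordered componentwise. Pure belief structure: beliefs of player $i$ in $G=(S_1,S_2,S_3)$ are the joint strategies $s_{-i}\in S_{-i}=\prod_{j\ne i}S_j$, expected payoff is the payoff. $s_i\in BR_G(s_{-i})$ iff $p_i(s_i,s_{-i})\ge p_i(s_i',s_{-i})$ for all $s_i'\in S_i$. Property B: every $s_{-i}\in\prod_{j\ne i}\mathbb N$ has a best response in $H$. $GR(G)_i:=\{s_i\in\mathbb N\mid\exists s_{-i}\in S_{-i}: s_i\in BR_H(s_{-i})\}$; $LR(G)_i:=\{s_i\in\mathbb N\mid\exists s_{-i}\in S_{-i}: s_i\in BR_G(s_{-i})\}$; $\overline{T}(G):=T(G)\cap G$. Iterations: $T^0:=H$, $T^{\alpha+1}:=T(T^\alpha)$, $T^\beta:=\bigcap_{\alpha<\beta}T^\alpha$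 for limit $\beta$; closure ordinal = least $\alpha$ with $T^{\alpha+1}=T^\alpha$. *)

theory Defs
  imports Main
begin

datatype player = P1 | P2 | P3

type_synonym profile = "player \<Rightarrow> nat"

(* a restriction (S_1,S_2,S_3); the componentwise order is the pointwise order
   on functions, H = top = (\<lambda>_. UNIV), intersection = inf / INF *)
type_synonym restr = "player \<Rightarrow> nat set"

definition pay :: "player \<Rightarrow> profile \<Rightarrow> nat" where
  "pay i s = (case i of
       P1 \<Rightarrow> (if s P1 = s P2 + 1 then s P2 + 1 else 0)
     | P2 \<Rightarrow> (if s P1 = s P2 then s P1 else 0)
     | P3 \<Rightarrow> 0)"

definition Hgame :: restr where "Hgame = (\<lambda>_. UNIV)"

(* belief s_{-i} of player i in G: the components j \<noteq> i of s lie in S_j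
   (the i-component of s is irrelevant) *)
definition belief_in :: "restr \<Rightarrow> player \<Rightarrow> profile \<Rightarrow> bool" where
  "belief_in G i s \<longleftrightarrow> (\<forall>j. j \<noteq> i \<longrightarrow> s j \<in> G j)"

definition BR :: "restr \<Rightarrow> player \<Rightarrow> profile \<Rightarrow> nat \<Rightarrow> bool" where
  "BR G i s x \<longleftrightarrow> (\<forall>y \<in> G i. pay i (s(i := x)) \<ge> pay i (s(i := y)))"

definition propertyB :: bool where
  "propertyB \<longleftrightarrow> (\<forall>i s. \<exists>x. BR Hgame i s x)"

definition GR :: "restr \<Rightarrow> restr" where
  "GR G = (\<lambda>i. {x. \<exists>s. belief_in G i s \<and> BR Hgame i s x})"

definition LR :: "restr \<Rightarrow> restr" where
  "LR G = (\<lambda>i. {x. \<exists>s. belief_in G i s \<and> BR G i s x})"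

definition bar :: "(restr \<Rightarrow> restr) \<Rightarrow> restr \<Rightarrow> restr" where
  "bar T G = inf (T G) G"

definition is_succ_of :: "'o::wellorder \<Rightarrow> 'o \<Rightarrow> bool" where
  "is_succ_of \<beta> \<alpha> \<longleftrightarrow> \<beta> < \<alpha> \<and> (\<forall>\<gamma><\<alpha>. \<gamma> \<le> \<beta>)"

(* T^0 = H (empty INF = top = H), T^{\<beta>+1} = T(T^\<beta>), T^\<lambda> = INF_{\<beta><\<lambda>} T^\<beta> *)
definition titer :: "(restr \<Rightarrow> restr) \<Rightarrow> 'o::wellorder \<Rightarrow> restr" where
  "titer T = wfrec {(x, y). x < y}
     (\<lambda>f \<alpha>. if \<exists>\<beta>. is_succ_of \<beta> \<alpha> then T (f (THE \<beta>. is_succ_of \<beta> \<alpha>))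
            else (INF \<beta>\<in>{\<beta>. \<beta> < \<alpha>}. f \<beta>))"

definition is_omega :: "'o::wellorder \<Rightarrow> bool" where
  "is_omega \<alpha> \<longleftrightarrow> infinite {\<beta>. \<beta> < \<alpha>} \<and> (\<forall>\<beta><\<alpha>. finite {\<gamma>. \<gamma> < \<beta>})"

definition is_omega_plus_one :: "'o::wellorder \<Rightarrow> bool" where
  "is_omega_plus_one \<alpha> \<longleftrightarrow> (\<exists>\<beta>. is_succ_of \<beta> \<alpha> \<and> is_omega \<beta>)"

definition is_closure_ordinal :: "(restr \<Rightarrow> restr) \<Rightarrow> 'o::wellorder \<Rightarrow> bool" where
  "is_closure_ordinal T \<alpha> \<longleftrightarrow> T (titer T \<alpha>) = titer T \<alpha> \<and>
     (\<forall>\<gamma><\<alpha>. T (titer T \<gamma>) \<noteq> titer T \<gamma>)"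

end

theory Submission
  imports Defs
begin
definition upc :: "nat set \<Rightarrow> bool" where
  "upc S \<longleftrightarrow> (\<forall>x y. x \<in> S \<longrightarrow> x \<le> y \<longrightarrow> y \<in> S)"

lemma belief_P1: "belief_in G P1 s \<longleftrightarrow> s P2 \<in> G P2 \<and> s P3 \<in> G P3"
  unfolding belief_in_def by (metis player.distinct player.exhaust)
lemma belief_P2: "belief_in G P2 s \<longleftrightarrow> s P1 \<in> G P1 \<and> s P3 \<in> G P3"
  unfolding belief_in_def by (metis player.distinct player.exhaust)
lemma belief_P3: "belief_in G P3 s \<longleftrightarrow> s P1 \<in> G P1 \<and> s P2 \<in> G P2"
  unfolding belief_in_def by (metis player.distinct player.exhaust)

lemma pay1: "pay P1 s = (if s P1 = s P2 + 1 then s P2 + 1 else 0)" by (simp add: pay_def)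
lemma pay2: "pay P2 s = (if s P1 = s P2 then s P1 else 0)" by (simp add: pay_def)
lemma pay3: "pay P3 s = 0" by (simp add: pay_def)

lemma BRH1: "BR Hgame P1 s x \<longleftrightarrow> x = s P2 + 1"
proof
  assume "BR Hgame P1 s x"
  then have "pay P1 (s(P1 := x)) \<ge> pay P1 (s(P1 := s P2 + 1))" by (simp add: BR_def Hgame_def)
  then show "x = s P2 + 1" by (simp add: pay1 split: if_splits)
next
  assume "x = s P2 + 1" then show "BR Hgame P1 s x" by (simp add: BR_def pay1)
qed

lemma BRH2: "BR Hgame P2 s x \<longleftrightarrow> s P1 = 0 \<or> x = s P1"
proof
  assume "BR Hgame P2 s x"
  then have "pay P2 (s(P2 := x)) \<ge> pay P2 (s(P2 := s P1))" by (simp add: BR_def Hgame_def)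
  then show "s P1 = 0 \<or> x = s P1" by (simp add: pay2 split: if_splits)
next
  assume "s P1 = 0 \<or> x = s P1" then show "BR Hgame P2 s x" by (auto simp add: BR_def pay2)
qed

lemma BR3: "BR G P3 s x" by (simp add: BR_def pay3)

lemma BR_mono: "BR Hgame i s x \<Longrightarrow> BR G i s x"
  by (simp add: BR_def Hgame_def)

lemma propB: propertyB
  unfolding propertyB_def
proof (intro allI)
  fix i s show "\<exists>x. BR Hgame i s x"
    by (cases i) (auto simp: BRH1 BRH2 BR3)
qed

lemma GR1: "GR G P1 = {x. \<exists>s. s P2 \<in> G P2 \<and> s P3 \<in> G P3 \<and> x = s P2 + 1}"
  by (auto simp: GR_def belief_P1 BRH1)
lemma GR2: "GR G P2 = {x. \<exists>s. s P1 \<in> G P1 \<and> s P3 \<in> G P3 \<and> (s P1 = 0 \<or> x = s P1)}"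
  by (auto simp: GR_def belief_P2 BRH2)
lemma GR3: "GR G P3 = {x. \<exists>s. s P1 \<in> G P1 \<and> s P2 \<in> G P2}"
  by (auto simp: GR_def belief_P3 BR3)
lemma LR3: "LR G P3 = {x. \<exists>s. s P1 \<in> G P1 \<and> s P2 \<in> G P2}"
  by (auto simp: LR_def belief_P3 BR3)

lemma key:
  assumes u1: "upc (G P1)" and u2: "upc (G P2)"
  shows "bar LR G = bar GR G"
proof
  fix i
  show "bar LR G i = bar GR G i"
  proof (cases i)
    case P3 then show ?thesis by (simp add: bar_def GR3 LR3)
  next
    case P1
    have "x \<in> GR G P1" if x: "x \<in> G P1" and l: "x \<in> LR G P1" for x
    proof -
      obtain s where b: "belief_in G P1 s" and br: "BR G P1 s x" using l by (auto simp: LR_def)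
      have s2: "s P2 \<in> G P2" and s3: "s P3 \<in> G P3" using b by (auto simp: belief_P1)
      show ?thesis
      proof (cases "x = s P2 + 1")
        case True then show ?thesis using s2 s3 by (auto simp: GR1)
      next
        case False
        have nl: "s P2 + 1 \<notin> G P1"
        proof
          assume "s P2 + 1 \<in> G P1"
          then have "pay P1 (s(P1 := x)) \<ge> pay P1 (s(P1 := s P2 + 1))" using br by (simp add: BR_def)
          then show False using False by (simp add: pay1)
        qed
        have "x > s P2 + 1" using nl x u1 unfolding upc_def by (metis not_le_imp_less)
        then have "s P2 \<le> x - 1" by linarith
        then have "x - 1 \<in> G P2" using s2 u2 unfolding upc_def by blast
        then show ?thesis using s3 \<open>x > s P2 + 1\<close> unfolding GR1
          by (intro CollectI exI[of _ "s(P2 := x - 1)"]) auto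
      qed
    qed
    moreover have "x \<in> LR G P1" if "x \<in> GR G P1" for x
      using that by (auto simp: GR_def LR_def BR_mono)
    ultimately show ?thesis using P1 by (auto simp: bar_def)
  next
    case P2
    have "x \<in> GR G P2" if x: "x \<in> G P2" and l: "x \<in> LR G P2" for x
    proof -
      obtain s where b: "belief_in G P2 s" and br: "BR G P2 s x" using l by (auto simp: LR_def)
      have s1: "s P1 \<in> G P1" and s3: "s P3 \<in> G P3" using b by (auto simp: belief_P2)
      show ?thesis
      proof (cases "s P1 = 0 \<or> x = s P1")
        case True then show ?thesis using s1 s3 unfolding GR2 by blast
      next
        case False
        have nl: "s P1 \<notin> G P2"
        proof
          assume "s P1 \<in> G P2"
          then have "pay P2 (s(P2 := x)) \<ge> pay P2 (s(P2 := s P1))" using br by (simp add: BR_def)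
          then show False using False by (simp add: pay2)
        qed
        have "x > s P1" using nl x u2 unfolding upc_def by (metis not_le_imp_less)
        then have "x \<in> G P1" using s1 u1 unfolding upc_def by auto
        then show ?thesis using s3 unfolding GR2
          by (intro CollectI exI[of _ "s(P1 := x)"]) auto
      qed
    qed
    moreover have "x \<in> LR G P2" if "x \<in> GR G P2" for x
      using that by (auto simp: GR_def LR_def BR_mono)
    ultimately show ?thesis using P2 by (auto simp: bar_def)
  qed
qed

lemma upc_bar:
  assumes u1: "upc (G P1)" and u2: "upc (G P2)"
  shows "upc (bar GR G P1) \<and> upc (bar GR G P2)"
proof
  show "upc (bar GR G P1)" unfolding upc_def bar_def
  proof (intro allI impI)
    fix x y assume a: "x \<in> inf (GR G) G P1" "x \<le> y"
    have "x \<in> GR G P1" "x \<in> G P1" using a(1) by simp_all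
    then obtain s where s: "s P2 \<in> G P2" "s P3 \<in> G P3" "x = s P2 + 1" "x \<in> G P1" unfolding GR1 by blast
    have "y - 1 \<in> G P2" using s a(2) u2 unfolding upc_def by (metis add_diff_cancel_right' diff_le_mono)
    moreover have "y \<in> G P1" using s a(2) u1 unfolding upc_def by blast
    moreover have "y \<in> GR G P1" unfolding GR1
      using s a \<open>y - 1 \<in> G P2\<close> by (intro CollectI exI[of _ "s(P2 := y - 1)"]) auto
    ultimately show "y \<in> inf (GR G) G P1" by simp
  qed
  show "upc (bar GR G P2)" unfolding upc_def bar_def
  proof (intro allI impI)
    fix x y assume a: "x \<in> inf (GR G) G P2" "x \<le> y"
    have "x \<in> GR G P2" "x \<in> G P2" using a(1) by simp_all
    then obtain s where s: "s P1 \<in> G P1" "s P3 \<in> G P3" "s P1 = 0 \<or> x = s P1" "x \<in> G P2" unfolding GR2 by blast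
    have y2: "y \<in> G P2" using s a(2) u2 unfolding upc_def by blast
    show "y \<in> inf (GR G) G P2"
    proof (cases "s P1 = 0")
      case True
      have "y \<in> GR G P2" unfolding GR2 using s True by blast
      then show ?thesis using y2 by simp
    next
      case False
      then have "y \<in> G P1" using s a(2) u1 unfolding upc_def by metis
      then have "y \<in> GR G P2" unfolding GR2 using s by (intro CollectI exI[of _ "s(P1 := y)"]) simp
      then show ?thesis using y2 by simp
    qed
  qed
qed

definition fs :: "nat \<Rightarrow> restr" where
  "fs n = (\<lambda>i. case i of P1 \<Rightarrow> {x. (n+1) div 2 \<le> x} | P2 \<Rightarrow> {x. n div 2 \<le> x} | P3 \<Rightarrow> UNIV)"

lemma fs0: "fs 0 = (\<lambda>_. UNIV)"
  by (auto simp: fs_def split: player.splits)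

lemma fsP1: "fs n P1 = {x. (n+1) div 2 \<le> x}" by (simp add: fs_def)
lemma fsP2: "fs n P2 = {x. n div 2 \<le> x}" by (simp add: fs_def)
lemma fsP3: "fs n P3 = UNIV" by (simp add: fs_def)

lemma fs_step: "bar GR (fs n) = fs (Suc n)"
proof
  fix i show "bar GR (fs n) i = fs (Suc n) i"
  proof (cases i)
    case P1
    have A: "x \<in> GR (fs n) P1" if "(n+2) div 2 \<le> x" for x
    proof -
      have "n div 2 \<le> x - 1" "x = x - 1 + 1" using that by linarith+
      then show ?thesis unfolding GR1 fsP2 fsP3
        by (intro CollectI exI[of _ "\<lambda>j. x - 1"]) simp
    qed
    have B: "(n+2) div 2 \<le> x" if h: "x \<in> GR (fs n) P1" for x
    proof -
      obtain s where "s P2 \<in> fs n P2" "x = s P2 + 1"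
        using h unfolding GR1 by blast
      then show ?thesis unfolding fsP2 by simp
    qed
    have C: "(n+1) div 2 \<le> x" if "(n+2) div 2 \<le> x" for x using that by linarith
    have "bar GR (fs n) P1 = GR (fs n) P1 \<inter> fs n P1" by (simp add: bar_def)
    also have "\<dots> = {x. (Suc n + 1) div 2 \<le> x}" unfolding fsP1 using A B C by auto
    finally show ?thesis using P1 by (simp add: fsP1)
  next
    case P2
    have A: "x \<in> GR (fs n) P2" if "(n+1) div 2 \<le> x" for x
      using that unfolding GR2 fsP1 fsP3
      by (intro CollectI exI[of _ "\<lambda>j. x"]) simp
    have B: "(n+1) div 2 \<le> x" if h: "x \<in> GR (fs n) P2" for x
    proof -
      obtain s where "s P1 \<in> fs n P1" "s P1 = 0 \<or> x = s P1"
        using h unfolding GR2 by blast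
      then show ?thesis unfolding fsP1 by auto
    qed
    have C: "n div 2 \<le> x" if "(n+1) div 2 \<le> x" for x using that by linarith
    have "bar GR (fs n) P2 = GR (fs n) P2 \<inter> fs n P2" by (simp add: bar_def)
    also have "\<dots> = {x. Suc n div 2 \<le> x}" unfolding fsP2 using A B C by auto
    finally show ?thesis using P2 by (simp add: fsP2)
  next
    case P3
    have "(n+1) div 2 \<le> n" "n div 2 \<le> n" by linarith+
    then have "x \<in> GR (fs n) P3" for x unfolding GR3 fsP1 fsP2
      by (intro CollectI exI[of _ "\<lambda>j. n"]) simp
    then show ?thesis using P3 by (auto simp: bar_def fsP3)
  qed
qed

lemma fs_neq: "fs (Suc n) \<noteq> fs n"
proof
  assume h: "fs (Suc n) = fs n"
  have "fs (Suc n) P1 = fs n P1" "fs (Suc n) P2 = fs n P2" using h by auto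
  then have "{x. (n+2) div 2 \<le> x} = {x. (n+1) div 2 \<le> x}" "{x. (n+1) div 2 \<le> x} = {x::nat. n div 2 \<le> x}"
    by (auto simp: fs_def)
  then have "(n+2) div 2 = (n+1) div 2" "(n+1) div 2 = n div 2"
    by (metis antisym mem_Collect_eq order_refl)+
  moreover have "(n+2) div 2 = n div 2 + 1" by simp
  ultimately show False by linarith
qed

lemma upc_fs: "upc (fs n P1) \<and> upc (fs n P2)"
  by (auto simp: upc_def fsP1 fsP2)

lemma succ_unique: "is_succ_of b a \<Longrightarrow> is_succ_of b' a \<Longrightarrow> b = b'"
  unfolding is_succ_of_def by (meson antisym)

lemma the_succ: "is_succ_of b a \<Longrightarrow> (THE b. is_succ_of b a) = b"
  using succ_unique by blast

lemma titer_unfold: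
  "titer T (\<alpha>::'o::wellorder) = (if \<exists>\<beta>. is_succ_of \<beta> \<alpha> then T (titer T (THE \<beta>. is_succ_of \<beta> \<alpha>))
            else (INF \<beta>\<in>{\<beta>. \<beta> < \<alpha>}. titer T \<beta>))"
proof -
  have "titer T \<alpha> = (\<lambda>f \<alpha>. if \<exists>\<beta>. is_succ_of \<beta> \<alpha> then T (f (THE \<beta>. is_succ_of \<beta> \<alpha>))
            else (INF \<beta>\<in>{\<beta>. \<beta> < \<alpha>}. f \<beta>)) (cut (titer T) {(x, y). x < y} \<alpha>) \<alpha>"
    unfolding titer_def by (rule wfrec[OF wf])
  also have "\<dots> = (if \<exists>\<beta>. is_succ_of \<beta> \<alpha> then T (titer T (THE \<beta>. is_succ_of \<beta> \<alpha>))
            else (INF \<beta>\<in>{\<beta>. \<beta> < \<alpha>}. titer T \<beta>))"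
  proof (cases "\<exists>\<beta>. is_succ_of \<beta> \<alpha>")
    case True
    then obtain b where b: "is_succ_of b \<alpha>" by blast
    then have "b < \<alpha>" by (simp add: is_succ_of_def)
    then show ?thesis using b by (simp add: the_succ cut_apply)
  next
    case False
    have "(INF \<beta>\<in>{\<beta>. \<beta> < \<alpha>}. cut (titer T) {(x, y). x < y} \<alpha> \<beta>) = (INF \<beta>\<in>{\<beta>. \<beta> < \<alpha>}. titer T \<beta>)"
      by (rule INF_cong) (auto simp: cut_apply)
    then show ?thesis using False by simp
  qed
  finally show ?thesis .
qed

lemma titer_succ: "is_succ_of b a \<Longrightarrow> titer T a = T (titer T b)"
  by (subst titer_unfold) (auto simp: the_succ)

lemma titer_lim: "\<not> (\<exists>b. is_succ_of b a) \<Longrightarrow> titer T a = (INF \<beta>\<in>{\<beta>. \<beta> < a}. titer T \<beta>)"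
  by (subst titer_unfold) simp

lemma finite_stage:
  fixes \<beta> :: "'o::wellorder"
  shows "finite {\<gamma>. \<gamma> < \<beta>} \<Longrightarrow> titer (bar GR) \<beta> = fs (card {\<gamma>. \<gamma> < \<beta>})"
proof (induction \<beta> rule: less_induct)
  case (less \<beta>)
  show ?case
  proof (cases "{\<gamma>. \<gamma> < \<beta>} = {}")
    case True
    then have "\<not> (\<exists>b. is_succ_of b \<beta>)" by (auto simp: is_succ_of_def)
    then show ?thesis using True by (simp add: titer_lim fs0 top_fun_def[symmetric])
  next
    case False
    define b where "b = Max {\<gamma>. \<gamma> < \<beta>}"
    have bl: "b < \<beta>" using Max_in[OF less.prems False] b_def by simp
    have bm: "\<gamma> \<le> b" if "\<gamma> < \<beta>" for \<gamma> using that less.prems b_def by simp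
    have sb: "is_succ_of b \<beta>" using bl bm by (simp add: is_succ_of_def)
    have eq: "{\<gamma>. \<gamma> < \<beta>} = insert b {\<gamma>. \<gamma> < b}" using bl bm
      by (auto intro: less_trans simp: le_less)
    have fb: "finite {\<gamma>. \<gamma> < b}" using less.prems eq by simp
    have cb: "card {\<gamma>. \<gamma> < \<beta>} = Suc (card {\<gamma>. \<gamma> < b})" using eq fb by simp
    have "titer (bar GR) \<beta> = bar GR (titer (bar GR) b)" by (rule titer_succ[OF sb])
    also have "\<dots> = bar GR (fs (card {\<gamma>. \<gamma> < b}))" using less.IH[OF bl fb] by simp
    also have "\<dots> = fs (card {\<gamma>. \<gamma> < \<beta>})" using cb fs_step by simp
    finally show ?thesis .
  qed
qed

lemma unbounded:
  fixes \<alpha> :: "'o::wellorder"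
  assumes om: "is_omega \<alpha>"
  shows "\<exists>\<beta><\<alpha>. m \<le> card {\<gamma>. \<gamma> < \<beta>}"
proof -
  have inf: "infinite {\<beta>. \<beta> < \<alpha>}" using om by (simp add: is_omega_def)
  obtain F where F: "F \<subseteq> {\<beta>. \<beta> < \<alpha>}" "finite F" "card F = Suc m"
    using infinite_arbitrarily_large[OF inf] by blast
  then have Fne: "F \<noteq> {}" by auto
  define \<beta> where "\<beta> = Max F"
  have "\<beta> \<in> F" using F Fne \<beta>_def by simp
  then have bl: "\<beta> < \<alpha>" using F by auto
  have "F - {\<beta>} \<subseteq> {\<gamma>. \<gamma> < \<beta>}"
  proof
    fix x assume x: "x \<in> F - {\<beta>}"
    then have "x \<le> \<beta>" unfolding \<beta>_def using F(2) by simp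
    then show "x \<in> {\<gamma>. \<gamma> < \<beta>}" using x by auto
  qed
  moreover have "finite {\<gamma>. \<gamma> < \<beta>}" using om bl by (simp add: is_omega_def)
  ultimately have "card (F - {\<beta>}) \<le> card {\<gamma>. \<gamma> < \<beta>}" by (rule card_mono[rotated])
  moreover have "card (F - {\<beta>}) = m" using F \<open>\<beta> \<in> F\<close> by simp
  ultimately show ?thesis using bl by blast
qed

definition W :: restr where "W = (\<lambda>i. if i = P3 then UNIV else {})"

lemma omega_no_succ:
  fixes \<alpha> :: "'o::wellorder"
  assumes om: "is_omega \<alpha>"
  shows "\<not> (\<exists>b. is_succ_of b \<alpha>)"
proof
  assume "\<exists>b. is_succ_of b \<alpha>"
  then obtain b where b: "b < \<alpha>" "\<forall>\<gamma><\<alpha>. \<gamma> \<le> b" by (auto simp: is_succ_of_def)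
  have "{\<gamma>. \<gamma> < \<alpha>} \<subseteq> insert b {\<gamma>. \<gamma> < b}" using b by (auto simp: le_less)
  moreover have "finite {\<gamma>. \<gamma> < b}" using om b by (simp add: is_omega_def)
  ultimately have "finite {\<gamma>. \<gamma> < \<alpha>}" using finite_subset by blast
  then show False using om by (simp add: is_omega_def)
qed

lemma omega_stage:
  fixes \<alpha> :: "'o::wellorder"
  assumes om: "is_omega \<alpha>"
  shows "titer (bar GR) \<alpha> = W"
proof -
  have fin: "finite {\<gamma>. \<gamma> < \<beta>}" if "\<beta> < \<alpha>" for \<beta> using om that by (simp add: is_omega_def)
  have "titer (bar GR) \<alpha> = (INF \<beta>\<in>{\<beta>. \<beta> < \<alpha>}. titer (bar GR) \<beta>)"
    by (rule titer_lim[OF omega_no_succ[OF om]])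
  also have "\<dots> = (INF \<beta>\<in>{\<beta>. \<beta> < \<alpha>}. fs (card {\<gamma>. \<gamma> < \<beta>}))"
    using fin finite_stage by (intro INF_cong) auto
  also have "\<dots> = W"
  proof
    fix i
    show "(INF \<beta>\<in>{\<beta>. \<beta> < \<alpha>}. fs (card {\<gamma>. \<gamma> < \<beta>})) i = W i"
    proof (cases i)
      case P1
      have "x \<notin> (INF \<beta>\<in>{\<beta>. \<beta> < \<alpha>}. fs (card {\<gamma>. \<gamma> < \<beta>})) P1" for x
      proof
        assume h: "x \<in> (INF \<beta>\<in>{\<beta>. \<beta> < \<alpha>}. fs (card {\<gamma>. \<gamma> < \<beta>})) P1"
        obtain \<beta> where "\<beta> < \<alpha>" "2*x+2 \<le> card {\<gamma>. \<gamma> < \<beta>}" using unbounded[OF om] by blast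
        then have "x \<in> fs (card {\<gamma>. \<gamma> < \<beta>}) P1" using h by (simp add: INF_apply)
        then show False using \<open>2*x+2 \<le> _\<close> unfolding fsP1 by (simp; linarith)
      qed
      then show ?thesis using P1 by (auto simp: W_def)
    next
      case P2
      have "x \<notin> (INF \<beta>\<in>{\<beta>. \<beta> < \<alpha>}. fs (card {\<gamma>. \<gamma> < \<beta>})) P2" for x
      proof
        assume h: "x \<in> (INF \<beta>\<in>{\<beta>. \<beta> < \<alpha>}. fs (card {\<gamma>. \<gamma> < \<beta>})) P2"
        obtain \<beta> where "\<beta> < \<alpha>" "2*x+2 \<le> card {\<gamma>. \<gamma> < \<beta>}" using unbounded[OF om] by blast
        then have "x \<in> fs (card {\<gamma>. \<gamma> < \<beta>}) P2" using h by (simp add: INF_apply)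
        then show False using \<open>2*x+2 \<le> _\<close> unfolding fsP2 by (simp; linarith)
      qed
      then show ?thesis using P2 by (auto simp: W_def)
    next
      case P3
      then show ?thesis by (simp add: INF_apply fsP3 W_def)
    qed
  qed
  finally show ?thesis .
qed

lemma bar_W: "bar GR W = (\<lambda>i. {})"
proof
  fix i show "bar GR W i = {}"
  proof (cases i)
    case P3
    have "GR W P3 = {}" unfolding GR3 W_def by simp
    then show ?thesis using P3 by (simp add: bar_def)
  qed (simp_all add: bar_def W_def)
qed

lemma bar_empty: "bar T (\<lambda>i. {}) = (\<lambda>i. {})"
  by (simp add: bar_def inf_fun_def)

lemma W_neq: "bar GR W \<noteq> W"
proof
  assume "bar GR W = W"
  then have "bar GR W P3 = W P3" by simp
  then show False unfolding bar_W by (simp add: W_def)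
qed

lemma omega1_stage:
  fixes \<alpha> :: "'o::wellorder"
  assumes "is_omega_plus_one \<alpha>"
  shows "titer (bar GR) \<alpha> = (\<lambda>i. {})"
proof -
  obtain b where b: "is_succ_of b \<alpha>" "is_omega b" using assms by (auto simp: is_omega_plus_one_def)
  have "titer (bar GR) \<alpha> = bar GR (titer (bar GR) b)" by (rule titer_succ[OF b(1)])
  also have "\<dots> = bar GR W" unfolding omega_stage[OF b(2)] ..
  also have "\<dots> = (\<lambda>i. {})" by (rule bar_W)
  finally show ?thesis .
qed

lemma LR_eq:
  fixes \<alpha> :: "'o::wellorder"
  shows "titer (bar LR) \<alpha> = titer (bar GR) \<alpha> \<and> upc (titer (bar GR) \<alpha> P1) \<and> upc (titer (bar GR) \<alpha> P2)"
proof (induction \<alpha> rule: less_induct)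
  case (less \<alpha>)
  show ?case
  proof (cases "\<exists>b. is_succ_of b \<alpha>")
    case True
    then obtain b where b: "is_succ_of b \<alpha>" by blast
    then have bl: "b < \<alpha>" by (simp add: is_succ_of_def)
    note IH = less.IH[OF bl]
    have "titer (bar LR) \<alpha> = bar LR (titer (bar LR) b)" by (rule titer_succ[OF b])
    also have "\<dots> = bar LR (titer (bar GR) b)" using IH by simp
    also have "\<dots> = bar GR (titer (bar GR) b)" using IH by (intro key) simp_all
    also have "\<dots> = titer (bar GR) \<alpha>" by (rule titer_succ[OF b, symmetric])
    finally have e: "titer (bar LR) \<alpha> = titer (bar GR) \<alpha>" .
    have "upc (bar GR (titer (bar GR) b) P1) \<and> upc (bar GR (titer (bar GR) b) P2)"
      using IH by (intro upc_bar) simp_all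
    then show ?thesis unfolding e titer_succ[OF b, of "bar GR"] by simp
  next
    case False
    have e: "titer (bar LR) \<alpha> = titer (bar GR) \<alpha>"
      unfolding titer_lim[OF False] using less.IH by (intro INF_cong) auto
    have u: "upc (titer (bar GR) \<beta> i)" if "\<beta> < \<alpha>" "i = P1 \<or> i = P2" for \<beta> i
      using less.IH[OF that(1)] that(2) by blast
    have "upc (titer (bar GR) \<alpha> i)" if i: "i = P1 \<or> i = P2" for i
      unfolding titer_lim[OF False] upc_def
    proof (intro allI impI)
      fix x y assume x: "x \<in> (INF \<beta>\<in>{\<beta>. \<beta> < \<alpha>}. titer (bar GR) \<beta>) i" and xy: "x \<le> y"
      have "\<forall>\<beta>\<in>{\<beta>. \<beta> < \<alpha>}. x \<in> titer (bar GR) \<beta> i" using x by (simp add: INF_apply)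
      then have "\<forall>\<beta>\<in>{\<beta>. \<beta> < \<alpha>}. y \<in> titer (bar GR) \<beta> i"
        using u[OF _ i] xy unfolding upc_def by blast
      then show "y \<in> (INF \<beta>\<in>{\<beta>. \<beta> < \<alpha>}. titer (bar GR) \<beta>) i" by (simp add: INF_apply)
    qed
    then show ?thesis using e by simp
  qed
qed

lemma key_titer: "bar LR (titer (bar GR) (\<gamma>::'o::wellorder)) = bar GR (titer (bar GR) \<gamma>)"
  using LR_eq[of \<gamma>] by (intro key) simp_all

lemma closure_GR:
  fixes \<alpha> :: "'o::wellorder"
  assumes "is_omega_plus_one \<alpha>"
  shows "is_closure_ordinal (bar GR) \<alpha>"
proof -
  obtain b where b: "is_succ_of b \<alpha>" "is_omega b" using assms by (auto simp: is_omega_plus_one_def)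
  have "\<gamma> \<le> b" if "\<gamma> < \<alpha>" for \<gamma> using b that by (simp add: is_succ_of_def)
  moreover have "bar GR (titer (bar GR) \<gamma>) \<noteq> titer (bar GR) \<gamma>" if "\<gamma> \<le> b" for \<gamma>
  proof (cases "\<gamma> = b")
    case True then show ?thesis using omega_stage[OF b(2)] W_neq by simp
  next
    case False
    then have "\<gamma> < b" using that by simp
    then have "finite {\<delta>. \<delta> < \<gamma>}" using b(2) by (simp add: is_omega_def)
    then have "titer (bar GR) \<gamma> = fs (card {\<delta>. \<delta> < \<gamma>})" by (rule finite_stage)
    then show ?thesis using fs_step fs_neq by simp
  qed
  ultimately have "\<forall>\<gamma><\<alpha>. bar GR (titer (bar GR) \<gamma>) \<noteq> titer (bar GR) \<gamma>" by blast
  moreover have "bar GR (titer (bar GR) \<alpha>) = titer (bar GR) \<alpha>"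
    unfolding omega1_stage[OF assms] by (rule bar_empty)
  ultimately show ?thesis unfolding is_closure_ordinal_def by blast
qed

lemma closure_LR:
  fixes \<alpha> :: "'o::wellorder"
  assumes "is_omega_plus_one \<alpha>"
  shows "is_closure_ordinal (bar LR) \<alpha>"
proof -
  have e: "bar LR (titer (bar LR) \<gamma>) = bar GR (titer (bar GR) \<gamma>)" "titer (bar LR) \<gamma> = titer (bar GR) \<gamma>"
    for \<gamma> :: 'o
    using LR_eq[of \<gamma>] key_titer[of \<gamma>] by simp_all
  show ?thesis using closure_GR[OF assms] unfolding is_closure_ordinal_def e(2) key_titer .
qed

theorem mainTheorem15:
  shows "propertyB \<and>
    (\<forall>\<alpha>::'o::wellorder. is_omega \<alpha> \<longrightarrow>
        titer (bar GR) \<alpha> = (\<lambda>i. if i = P3 then UNIV else {})) \<and>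
    (\<forall>\<alpha>::'o. is_omega_plus_one \<alpha> \<longrightarrow> titer (bar GR) \<alpha> = (\<lambda>i. {})) \<and>
    (\<forall>\<alpha>::'o. titer (bar LR) \<alpha> = titer (bar GR) \<alpha>) \<and>
    (\<forall>\<alpha>::'o. is_omega_plus_one \<alpha> \<longrightarrow>
        is_closure_ordinal (bar GR) \<alpha> \<and> is_closure_ordinal (bar LR) \<alpha>)"
proof (intro conjI allI impI)
  show propertyB by (rule propB)
  fix \<alpha> :: 'o
  show "is_omega \<alpha> \<Longrightarrow> titer (bar GR) \<alpha> = (\<lambda>i. if i = P3 then UNIV else {})"
    using omega_stage[of \<alpha>] by (simp add: W_def)
  show "is_omega_plus_one \<alpha> \<Longrightarrow> titer (bar GR) \<alpha> = (\<lambda>i. {})" by (rule omega1_stage)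
  show "titer (bar LR) \<alpha> = titer (bar GR) \<alpha>" using LR_eq[of \<alpha>] by simp
  show "is_omega_plus_one \<alpha> \<Longrightarrow> is_closure_ordinal (bar GR) \<alpha>" by (rule closure_GR)
  show "is_omega_plus_one \<alpha> \<Longrightarrow> is_closure_ordinal (bar LR) \<alpha>" by (rule closure_LR)
qed

end
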